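(* Let $\langle S,L,\tau,\ell\rangle$ be a labelled Markov chain and $P\in\mathcal{P}_\tau$ an $S^2_\Delta$-closed policy. If $C$ is a closed communication class of the Markov chain $\langle S\times S,P\rangle$, then either $C=\{(s,t)\}$ for some $(s,t)\in S^2_1$, or $C\subseteq S^2_\Delta$, or $C\subseteq S^2_{0,\tau}$.
   Context: Labelled Markov chain: finite $S$, finite $L$, $\tau:S\to\mathcal{D}(S)$, $\ell:S\to L$. $\Omega(\mu,\nu)$ = couplings. $S^2_\Delta=\{(s,s)\}$, $S^2_1=\{(s,t)\mid\ell(s)\ne\ell(t)\}$, $S^2_{0,\tau}=\{(s,t)\mid s\ne t,\ s\sim t\}$ where $\sim$ is probabilistic bisimilarity (the union of all equivalence relations $R$ such that for $(s,t)\in R$, $\ell(s)=\ell(t)$ and some $\omega\in\Omega(\tau(s),\tau(t))$ has support in $R$). $\mathcal{P}_\tau$ = policies $P:S\times S\to\mathcal{D}(S\times S)$ with $P(s,t)\in\Omega(\tau(s),\tau(t))$ for $(s,t)\notin S^2_1$ and $P(s,t)$ the point mass at $(s,t)$ for $(s,t)\in S^2_1$. $P$ is $S^2_\Delta$-closed if $\mathrm{support}(P(s,s))\subseteq S^2_\Delta$ for all $s$. A communication class is an equivalence class of mutual reachability in $\langle S\times S,P\rangle$; it is closed if it cannot be left with positive probability. *)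

theory Defs
  imports "HOL-Probability.Probability"
begin

definition couplings :: "'a pmf \<Rightarrow> 'b pmf \<Rightarrow> ('a \<times> 'b) pmf set" where
  "couplings \<mu> \<nu> = {\<omega>. map_pmf fst \<omega> = \<mu> \<and> map_pmf snd \<omega> = \<nu>}"

definition prob_bisimulation :: "('s \<Rightarrow> 's pmf) \<Rightarrow> ('s \<Rightarrow> 'l) \<Rightarrow> ('s \<times> 's) set \<Rightarrow> bool" where
  "prob_bisimulation \<tau> lab R \<longleftrightarrow> equiv UNIV R \<and>
     (\<forall>(s,t)\<in>R. lab s = lab t \<and> (\<exists>\<omega>\<in>couplings (\<tau> s) (\<tau> t). set_pmf \<omega> \<subseteq> R))"

definition bisimilar :: "('s \<Rightarrow> 's pmf) \<Rightarrow> ('s \<Rightarrow> 'l) \<Rightarrow> ('s \<times> 's) set" where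
  "bisimilar \<tau> lab = \<Union>{R. prob_bisimulation \<tau> lab R}"

definition S2_Delta :: "('s \<times> 's) set" where
  "S2_Delta = {(s,s) | s. True}"

definition S2_1 :: "('s \<Rightarrow> 'l) \<Rightarrow> ('s \<times> 's) set" where
  "S2_1 lab = {(s,t). lab s \<noteq> lab t}"

definition S2_0 :: "('s \<Rightarrow> 's pmf) \<Rightarrow> ('s \<Rightarrow> 'l) \<Rightarrow> ('s \<times> 's) set" where
  "S2_0 \<tau> lab = {(s,t). s \<noteq> t \<and> (s,t) \<in> bisimilar \<tau> lab}"

definition policies :: "('s \<Rightarrow> 's pmf) \<Rightarrow> ('s \<Rightarrow> 'l) \<Rightarrow> ('s \<times> 's \<Rightarrow> ('s \<times> 's) pmf) set" where
  "policies \<tau> lab = {P. \<forall>s t.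
      ((s,t) \<notin> S2_1 lab \<longrightarrow> P (s,t) \<in> couplings (\<tau> s) (\<tau> t)) \<and>
      ((s,t) \<in> S2_1 lab \<longrightarrow> P (s,t) = return_pmf (s,t))}"

definition Delta_closed :: "('s \<times> 's \<Rightarrow> ('s \<times> 's) pmf) \<Rightarrow> bool" where
  "Delta_closed P \<longleftrightarrow> (\<forall>s. set_pmf (P (s,s)) \<subseteq> S2_Delta)"

definition mc_step :: "('a \<Rightarrow> 'a pmf) \<Rightarrow> ('a \<times> 'a) set" where
  "mc_step K = {(x,y). y \<in> set_pmf (K x)}"

definition comm_class :: "('a \<Rightarrow> 'a pmf) \<Rightarrow> 'a \<Rightarrow> 'a set" where
  "comm_class K x = {y. (x,y) \<in> (mc_step K)\<^sup>* \<and> (y,x) \<in> (mc_step K)\<^sup>*}"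

definition is_comm_class :: "('a \<Rightarrow> 'a pmf) \<Rightarrow> 'a set \<Rightarrow> bool" where
  "is_comm_class K C \<longleftrightarrow> (\<exists>x. C = comm_class K x)"

definition closed_class :: "('a \<Rightarrow> 'a pmf) \<Rightarrow> 'a set \<Rightarrow> bool" where
  "closed_class K C \<longleftrightarrow> (\<forall>x\<in>C. set_pmf (K x) \<subseteq> C)"

end

theory Submission
  imports Defs
begin

lemma rtr_reach_S21:
  assumes P: "P \<in> policies \<tau> lab" and st: "(s,t) \<in> S2_1 lab"
    and r: "((s,t), y) \<in> (mc_step P)\<^sup>*"
  shows "y = (s,t)"
  using r
proof (induction rule: rtrancl_induct)
  case base then show ?case by simp
next
  case (step y z)
  then have "P (s,t) = return_pmf (s,t)" using P st unfolding policies_def by blast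
  with step show ?case by (auto simp: mc_step_def)
qed

lemma rtr_reach_Delta:
  assumes D: "Delta_closed P"
    and r: "((s,s), y) \<in> (mc_step P)\<^sup>*"
  shows "y \<in> S2_Delta"
  using r
proof (induction rule: rtrancl_induct)
  case base then show ?case by (simp add: S2_Delta_def)
next
  case (step y z)
  then obtain u where "y = (u,u)" by (auto simp: S2_Delta_def)
  with step D show ?case by (auto simp: mc_step_def Delta_closed_def)
qed

theorem mainTheorem15:
  fixes \<tau> :: "'s::finite \<Rightarrow> 's pmf" and lab :: "'s \<Rightarrow> 'l::finite"
    and P :: "'s \<times> 's \<Rightarrow> ('s \<times> 's) pmf" and C :: "('s \<times> 's) set"
  assumes "P \<in> policies \<tau> lab"
    and "Delta_closed P"
    and "is_comm_class P C"
    and "closed_class P C"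
  shows "(\<exists>s t. (s,t) \<in> S2_1 lab \<and> C = {(s,t)}) \<or> C \<subseteq> S2_Delta \<or> C \<subseteq> S2_0 \<tau> lab"
proof -
  obtain x where Cx: "C = comm_class P x" using assms(3) by (auto simp: is_comm_class_def)
  have reach: "(a,b) \<in> (mc_step P)\<^sup>*" if "a \<in> C" "b \<in> C" for a b
    proof -
    have "(a,x) \<in> (mc_step P)\<^sup>*" "(x,b) \<in> (mc_step P)\<^sup>*" using that Cx unfolding comm_class_def by auto
    then show ?thesis by (rule rtrancl_trans)
  qed
  show ?thesis
  proof (cases "\<exists>a\<in>C. a \<in> S2_1 lab")
    case True
    then obtain s t where st: "(s,t) \<in> C" "(s,t) \<in> S2_1 lab" by auto
    have "C = {(s,t)}"
      using rtr_reach_S21[OF assms(1) st(2) reach[OF st(1)]] st(1) by blast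
    with st show ?thesis by blast
  next
    case noS1: False
    show ?thesis
    proof (cases "\<exists>a\<in>C. a \<in> S2_Delta")
      case True
      then obtain s where s: "(s,s) \<in> C" by (auto simp: S2_Delta_def)
      have "C \<subseteq> S2_Delta"
        using rtr_reach_Delta[OF assms(2) reach[OF s]] by blast
      then show ?thesis by blast
    next
      case noD: False
      define R where "R = (C \<union> C\<inverse>)\<^sup>*"
      have symR: "sym R" unfolding R_def by (simp add: sym_rtrancl sym_Un_converse)
      have transR: "trans R" unfolding R_def by (rule trans_rtrancl)
      have eqR: "equiv UNIV R"
        using symR transR unfolding R_def equiv_def by (simp add: refl_rtrancl)
      have CR: "C \<subseteq> R" unfolding R_def by auto
      have Cstep: "lab u = lab t \<and> rel_pmf (\<lambda>a b. (a,b) \<in> R) (\<tau> u) (\<tau> t)" if "(u,t) \<in> C" for u t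
      proof -
        have n1: "(u,t) \<notin> S2_1 lab" using noS1 that by blast
        then have lab: "lab u = lab t" by (simp add: S2_1_def)
        have cp: "P (u,t) \<in> couplings (\<tau> u) (\<tau> t)" using assms(1) n1 unfolding policies_def by blast
        have "set_pmf (P (u,t)) \<subseteq> C" using assms(4) that unfolding closed_class_def by blast
        then have "rel_pmf (\<lambda>a b. (a,b) \<in> R) (\<tau> u) (\<tau> t)"
          using cp CR by (intro rel_pmf.intros[where pq="P (u,t)"]) (auto simp: couplings_def)
        with lab show ?thesis by simp
      qed
      have main: "lab s = lab t \<and> rel_pmf (\<lambda>a b. (a,b) \<in> R) (\<tau> s) (\<tau> t)" if "(s,t) \<in> R" for s t
        using that unfolding R_def
      proof (induction rule: rtrancl_induct)
        case base
        then show ?case by (auto intro: rel_pmf_reflI simp: R_def)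
      next
        case (step u t)
        have ut: "lab u = lab t \<and> rel_pmf (\<lambda>a b. (a,b) \<in> R) (\<tau> u) (\<tau> t)"
        proof (cases "(u,t) \<in> C")
          case True then show ?thesis using Cstep by blast
        next
          case False
          then have "(t,u) \<in> C" using step(2) by blast
          from Cstep[OF this] have "lab t = lab u" "rel_pmf (\<lambda>a b. (a,b) \<in> R) (\<tau> t) (\<tau> u)" by auto
          moreover from this(2) have "rel_pmf (\<lambda>a b. (a,b) \<in> R) (\<tau> u) (\<tau> t)"
          proof -
            assume h: "rel_pmf (\<lambda>a b. (a,b) \<in> R) (\<tau> t) (\<tau> u)"
            have "rel_pmf (conversep (\<lambda>a b. (a,b) \<in> R)) (\<tau> u) (\<tau> t)"
              using h by (simp only: pmf.rel_flip)
            then show ?thesis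
            proof (rule pmf.rel_mono_strong)
              fix a b assume "conversep (\<lambda>a b. (a,b) \<in> R) a b"
              then have "(b,a) \<in> R" by simp
              then show "(a,b) \<in> R" using symR by (blast dest: symD)
            qed
          qed
          ultimately show ?thesis by simp
        qed
        have "rel_pmf ((\<lambda>a b. (a,b) \<in> R) OO (\<lambda>a b. (a,b) \<in> R)) (\<tau> s) (\<tau> t)"
          unfolding pmf.rel_compp using step(3)[folded R_def] ut by (blast intro: relcomppI)
        then have "rel_pmf (\<lambda>a b. (a,b) \<in> R) (\<tau> s) (\<tau> t)"
        proof (rule pmf.rel_mono_strong)
          fix a b assume "((\<lambda>a b. (a,b) \<in> R) OO (\<lambda>a b. (a,b) \<in> R)) a b"
          then obtain c where "(a,c) \<in> R" "(c,b) \<in> R" by blast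
          then show "(a,b) \<in> R" using transR by (blast dest: transD)
        qed
        with step(3)[folded R_def] ut show ?case by (simp add: R_def)
      qed
      have bis: "prob_bisimulation \<tau> lab R"
        unfolding prob_bisimulation_def
      proof (intro conjI eqR ballI, clarify)
        fix s t assume "(s,t) \<in> R"
        from main[OF this] have "lab s = lab t" and "rel_pmf (\<lambda>a b. (a,b) \<in> R) (\<tau> s) (\<tau> t)" by auto
        from this(2) obtain pq where "\<And>a b. (a,b) \<in> set_pmf pq \<Longrightarrow> (a,b) \<in> R"
          "map_pmf fst pq = \<tau> s" "map_pmf snd pq = \<tau> t" by (erule rel_pmf.cases)
        then show "lab s = lab t \<and> (\<exists>\<omega>\<in>couplings (\<tau> s) (\<tau> t). set_pmf \<omega> \<subseteq> R)"
          using \<open>lab s = lab t\<close> by (auto simp: couplings_def)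
      qed
      have "C \<subseteq> S2_0 \<tau> lab"
      proof
        fix a assume a: "a \<in> C"
        obtain s t where [simp]: "a = (s,t)" by fastforce
        have "s \<noteq> t" using noD a by (auto simp: S2_Delta_def)
        moreover have "(s,t) \<in> bisimilar \<tau> lab" unfolding bisimilar_def using bis CR a by (intro UnionI[of R]) auto
        ultimately show "a \<in> S2_0 \<tau> lab" by (simp add: S2_0_def)
      qed
      then show ?thesis by blast
    qed
  qed
qed

end
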